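(* Let $G = K_{m_1} \otimes \cdots \otimes K_{m_t}$ with $m_i \geq 3$ for all $i$. Then $\dim(G) \geq \max\{m_i - 1 : i = 1,\dots,t\}$.
   Context: $K_r$ is the complete graph on $r$ vertices. The tensor product of graphs has vertex set the Cartesian product of vertex sets, with $(a_1,\dots,a_t)$ adjacent to $(b_1,\dots,b_t)$ iff $a_ib_i$ is an edge of the $i$-th factor for every $i$. For a connected graph and an ordered set $W=\{w_1,\dots,w_k\}$ of vertices, $r(v\mid W)=(d(v,w_1),\dots,d(v,w_k))$; $W$ is resolving if distinct vertices have distinct representations; $\dim(G)$ is the minimum size of a resolving set. *)

theory Defs
  imports Main
begin

type_synonym 'a graph = "'a set \<times> ('a \<Rightarrow> 'a \<Rightarrow> bool)"

definition verts :: "'a graph \<Rightarrow> 'a set" where "verts G = fst G"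
definition adj :: "'a graph \<Rightarrow> 'a \<Rightarrow> 'a \<Rightarrow> bool" where "adj G = snd G"

definition complete_graph :: "nat \<Rightarrow> nat graph" where
  "complete_graph r = ({0..<r}, \<lambda>a b. a \<noteq> b)"

definition tensor_product :: "'a graph list \<Rightarrow> 'a list graph" where
  "tensor_product Gs =
     ({xs. length xs = length Gs \<and> (\<forall>i<length Gs. xs ! i \<in> verts (Gs ! i))},
      \<lambda>xs ys. length xs = length Gs \<and> length ys = length Gs \<and>
              (\<forall>i<length Gs. adj (Gs ! i) (xs ! i) (ys ! i)))"

definition has_walk :: "'a graph \<Rightarrow> nat \<Rightarrow> 'a \<Rightarrow> 'a \<Rightarrow> bool" where
  "has_walk G n u v \<longleftrightarrow> (\<exists>p. length p = Suc n \<and> p ! 0 = u \<and> p ! n = v \<and>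
      (\<forall>i\<le>n. p ! i \<in> verts G) \<and> (\<forall>i<n. adj G (p ! i) (p ! Suc i)))"

text \<open>Graph distance (length of a shortest walk); meaningful for connected graphs.\<close>
definition gdist :: "'a graph \<Rightarrow> 'a \<Rightarrow> 'a \<Rightarrow> nat" where
  "gdist G u v = (LEAST n. has_walk G n u v)"

definition connected_graph :: "'a graph \<Rightarrow> bool" where
  "connected_graph G \<longleftrightarrow> (\<forall>u\<in>verts G. \<forall>v\<in>verts G. \<exists>n. has_walk G n u v)"

text \<open>W resolves G: distinct vertices have distinct distance vectors to W.
  (Order of W is irrelevant for this property.)\<close>
definition resolving :: "'a graph \<Rightarrow> 'a set \<Rightarrow> bool" where
  "resolving G W \<longleftrightarrow> W \<subseteq> verts G \<and>
     (\<forall>u\<in>verts G. \<forall>v\<in>verts G. (\<forall>w\<in>W. gdist G u w = gdist G v w) \<longrightarrow> u = v)"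

definition metric_dim :: "'a graph \<Rightarrow> nat" where
  "metric_dim G = (LEAST k. \<exists>W. finite W \<and> card W = k \<and> resolving G W)"

end

theory Submission
  imports Defs
begin

lemma walk_map:
  assumes vp: "\<And>x. x \<in> verts G \<Longrightarrow> \<sigma> x \<in> verts G"
    and ap: "\<And>x y. x \<in> verts G \<Longrightarrow> y \<in> verts G \<Longrightarrow> adj G x y \<Longrightarrow> adj G (\<sigma> x) (\<sigma> y)"
    and w: "has_walk G n u v"
  shows "has_walk G n (\<sigma> u) (\<sigma> v)"
proof -
  obtain p where p: "length p = Suc n" "p ! 0 = u" "p ! n = v"
    "\<forall>i\<le>n. p ! i \<in> verts G" "\<forall>i<n. adj G (p ! i) (p ! Suc i)"
    using w unfolding has_walk_def by blast
  show ?thesis unfolding has_walk_def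
    apply (rule exI[of _ "map \<sigma> p"])
    using p vp ap by auto
qed

lemma gdist_aut:
  assumes vp: "\<And>x. x \<in> verts G \<Longrightarrow> \<sigma> x \<in> verts G"
    and ap: "\<And>x y. x \<in> verts G \<Longrightarrow> y \<in> verts G \<Longrightarrow> adj G x y \<Longrightarrow> adj G (\<sigma> x) (\<sigma> y)"
    and inv: "\<And>x. x \<in> verts G \<Longrightarrow> \<sigma> (\<sigma> x) = x"
    and u: "u \<in> verts G" and v: "v \<in> verts G"
  shows "gdist G (\<sigma> u) (\<sigma> v) = gdist G u v"
proof -
  have "\<And>n. has_walk G n (\<sigma> u) (\<sigma> v) = has_walk G n u v"
  proof
    fix n assume "has_walk G n (\<sigma> u) (\<sigma> v)"
    from walk_map[of G \<sigma>, OF vp ap this] have "has_walk G n (\<sigma> (\<sigma> u)) (\<sigma> (\<sigma> v))" by blast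
    then show "has_walk G n u v" using inv u v by simp
  next
    fix n assume "has_walk G n u v"
    from walk_map[of G \<sigma>, OF vp ap this] show "has_walk G n (\<sigma> u) (\<sigma> v)" by blast
  qed
  then show ?thesis unfolding gdist_def by simp
qed

lemma verts_tp: "verts (tensor_product (map complete_graph ms)) =
   {xs. length xs = length ms \<and> (\<forall>i<length ms. xs ! i < ms ! i)}"
  by (simp add: tensor_product_def verts_def complete_graph_def)

lemma adj_tp: "adj (tensor_product (map complete_graph ms)) xs ys =
   (length xs = length ms \<and> length ys = length ms \<and> (\<forall>i<length ms. xs ! i \<noteq> ys ! i))"
  by (simp add: tensor_product_def adj_def complete_graph_def)

theorem corollary2p3:
  fixes ms :: "nat list"
  assumes "ms \<noteq> []"
    and "\<forall>i<length ms. ms ! i \<ge> 3"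
  shows "metric_dim (tensor_product (map complete_graph ms))
           \<ge> Max ((\<lambda>m. m - 1) ` set ms)"
proof -
  define G where "G = tensor_product (map complete_graph ms)"
  define t where "t = length ms"
  have V: "verts G = {xs. length xs = t \<and> (\<forall>i<t. xs ! i < ms ! i)}"
    unfolding G_def t_def by (rule verts_tp)
  have A: "\<And>xs ys. adj G xs ys = (length xs = t \<and> length ys = t \<and> (\<forall>i<t. xs ! i \<noteq> ys ! i))"
    unfolding G_def t_def by (rule adj_tp)
  have ms3: "\<And>i. i < t \<Longrightarrow> ms ! i \<ge> 3" using assms(2) t_def by auto
  have walk2: "has_walk G 2 u v" if u: "u \<in> verts G" and v: "v \<in> verts G" for u v
  proof -
    have ex: "\<exists>c. c < ms ! i \<and> c \<noteq> u ! i \<and> c \<noteq> v ! i" if "i < t" for i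
    proof -
      have "ms ! i \<ge> 3" using ms3 that by auto
      have "\<exists>c\<in>{0::nat,1,2}. c \<noteq> u ! i \<and> c \<noteq> v ! i" by force
      then obtain c where "c \<in> {0::nat,1,2}" "c \<noteq> u ! i" "c \<noteq> v ! i" by blast
      then show ?thesis using \<open>ms ! i \<ge> 3\<close> by (intro exI[of _ c]) auto
    qed
    define z where "z = map (\<lambda>i. SOME c. c < ms ! i \<and> c \<noteq> u ! i \<and> c \<noteq> v ! i) [0..<t]"
    have z: "length z = t" "\<And>i. i < t \<Longrightarrow> z ! i < ms ! i \<and> z ! i \<noteq> u ! i \<and> z ! i \<noteq> v ! i"
    proof -
      show "length z = t" unfolding z_def by simp
      fix i assume "i < t"
      from someI_ex[OF ex[OF this]] show "z ! i < ms ! i \<and> z ! i \<noteq> u ! i \<and> z ! i \<noteq> v ! i"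
        unfolding z_def using \<open>i < t\<close> by simp
    qed
    show ?thesis unfolding has_walk_def
      apply (rule exI[of _ "[u, z, v]"])
      using u v z by (auto simp: V A less_Suc_eq numeral_2_eq_2 le_Suc_eq nth_Cons split: nat.splits) (metis+)
  qed
  have gd0: "gdist G u v = 0 \<Longrightarrow> u = v" if "u \<in> verts G" "v \<in> verts G" for u v
  proof -
    assume "gdist G u v = 0"
    moreover have "has_walk G (gdist G u v) u v"
      unfolding gdist_def by (rule LeastI[of _ 2]) (rule walk2[OF that])
    ultimately have "has_walk G 0 u v" by simp
    then show "u = v" unfolding has_walk_def by auto
  qed
  have gdvv: "gdist G v v = 0" if "v \<in> verts G" for v
  proof -
    have "has_walk G 0 v v" unfolding has_walk_def using that
      by (intro exI[of _ "[v]"]) auto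
    then show ?thesis unfolding gdist_def by (simp add: Least_eq_0)
  qed
  have finV: "finite (verts G)"
  proof -
    have "verts G \<subseteq> {xs. set xs \<subseteq> {0..<sum_list ms} \<and> length xs = t}"
    proof
      fix xs assume "xs \<in> verts G"
      then have "length xs = t" "\<forall>i<t. xs ! i < ms ! i" using V by auto
      moreover have "\<And>i. i < t \<Longrightarrow> ms ! i \<le> sum_list ms" using t_def elem_le_sum_list by auto
      ultimately show "xs \<in> {xs. set xs \<subseteq> {0..<sum_list ms} \<and> length xs = t}"
        by (auto simp: in_set_conv_nth) (metis order_less_le_trans)
    qed
    then show ?thesis using finite_lists_length_eq[of "{0..<sum_list ms}" t] finite_subset by blast
  qed
  have resV: "resolving G (verts G)" unfolding resolving_def
  proof (intro conjI ballI impI subset_refl)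
    fix u v assume u: "u \<in> verts G" and v: "v \<in> verts G"
      and h: "\<forall>w\<in>verts G. gdist G u w = gdist G v w"
    have "gdist G u v = 0" using h v gdvv by auto
    then show "u = v" using gd0 u v by auto
  qed
  obtain m where mS: "m \<in> set ms" and mM: "Max ((\<lambda>m. m - 1) ` set ms) = m - 1"
  proof -
    have "Max ((\<lambda>m. m - 1) ` set ms) \<in> (\<lambda>m. m - 1) ` set ms"
      using assms(1) by (intro Max_in) auto
    then show ?thesis using that by blast
  qed
  obtain j where j: "j < t" "ms ! j = m" using mS t_def by (auto simp: in_set_conv_nth)
  have bound: "m - 1 \<le> card W" if fW: "finite W" and rW: "resolving G W" for W
  proof (rule ccontr)
    assume "\<not> m - 1 \<le> card W"
    then have cW: "card W + 2 \<le> m" by auto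
    define S where "S = (\<lambda>w. w ! j) ` W"
    have "card S \<le> card W" unfolding S_def using fW by (rule card_image_le)
    define B where "B = {0..<m} - S"
    have fS: "finite S" unfolding S_def using fW by simp
    have "card B \<ge> card {0..<m} - card S"
      unfolding B_def by (rule diff_card_le_card_Diff[OF fS])
    then have "card B \<ge> m - card S" by simp
    then have cB: "card B \<ge> 2" using \<open>card S \<le> card W\<close> cW by linarith
    then have "B \<noteq> {}" by (metis card.empty not_numeral_le_zero)
    then obtain a where a: "a \<in> B" by blast
    have "card (B - {a}) \<ge> 1" using cB a by (simp add: card_Diff_singleton_if)
    then have "B - {a} \<noteq> {}" by (metis card.empty not_one_le_zero)
    then obtain b where b: "b \<in> B" "b \<noteq> a" by blast
    have am: "a < m" "b < m" using a b B_def by auto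
    define sw where "sw = (\<lambda>c::nat. if c = a then b else if c = b then a else c)"
    define \<sigma> where "\<sigma> = (\<lambda>xs::nat list. xs[j := sw (xs ! j)])"
    have vp: "\<sigma> x \<in> verts G" if "x \<in> verts G" for x
      using that am j unfolding V \<sigma>_def sw_def by (auto simp: nth_list_update)
    have ap: "adj G (\<sigma> x) (\<sigma> y)" if "x \<in> verts G" "y \<in> verts G" "adj G x y" for x y
      using that j unfolding A \<sigma>_def sw_def
      by (auto simp: nth_list_update)
    have inv: "\<sigma> (\<sigma> x) = x" if "x \<in> verts G" for x
      using that j unfolding V \<sigma>_def sw_def by auto
    define xa where "xa = (replicate t (0::nat))[j := a]"
    define xb where "xb = (replicate t (0::nat))[j := b]"
    have xav: "xa \<in> verts G" and xbv: "xb \<in> verts G"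
      using ms3 am j unfolding V xa_def xb_def by (auto simp: nth_list_update) (metis less_le_trans zero_less_numeral)+
    have sxa: "\<sigma> xa = xb" unfolding \<sigma>_def xa_def xb_def sw_def using j by simp
    have "\<forall>w\<in>W. gdist G xa w = gdist G xb w"
    proof
      fix w assume wW: "w \<in> W"
      have "W \<subseteq> verts G" using rW unfolding resolving_def by (rule conjunct1)
      then have wv: "w \<in> verts G" using wW by (rule subsetD)
      have "w ! j \<in> S" using wW S_def by auto
      then have "w ! j \<noteq> a" "w ! j \<noteq> b" using a b B_def by auto
      then have "\<sigma> w = w" unfolding \<sigma>_def sw_def by simp
      moreover have "gdist G (\<sigma> xa) (\<sigma> w) = gdist G xa w"
        by (rule gdist_aut[of G \<sigma>, OF vp ap inv xav wv]) (assumption+)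
      ultimately show "gdist G xa w = gdist G xb w"
        using sxa by simp
    qed
    moreover have "\<forall>u\<in>verts G. \<forall>v\<in>verts G. (\<forall>w\<in>W. gdist G u w = gdist G v w) \<longrightarrow> u = v"
      using rW unfolding resolving_def by (rule conjunct2)
    ultimately have "xa = xb" using xav xbv by blast
    then have "xa ! j = xb ! j" by simp
    then show False using b j unfolding xa_def xb_def by simp
  qed
  have exk: "\<exists>k. \<exists>W. finite W \<and> card W = k \<and> resolving G W" using finV resV by blast
  have "m - 1 \<le> metric_dim G"
  proof -
    obtain W where W: "finite W" "card W = metric_dim G" "resolving G W"
      using LeastI_ex[OF exk] unfolding metric_dim_def by blast
    show ?thesis using bound[OF W(1) W(3)] W(2) by simp
  qed
  then show ?thesis using mM G_def by simp
qed

end
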